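(* Let $\varepsilon\in\{-1,1\}$, let $M(\phi,\xi,\eta,g_M)$ be a Lorentzian almost (para)contact manifold of dimension $2m+1$, let $(N,g_N)$ be a semi-Riemannian manifold of dimension $n$, and let $F:M\to N$ be an anti-invariant semi-Riemannian submersion. Then: (a) if $\xi$ is vertical, then $m\le n\le 2m$; (b) if $m=n$, then $\xi$ is vertical; (c) if $\xi$ is horizontal, then $m+1\le n$.
   Context: A Lorentzian almost contact ($\varepsilon=-1$), resp. almost paracontact ($\varepsilon=1$), manifold is a $(2m+1)$-dimensional manifold $M$ with Lorentzian metric $g_M$, $(1,1)$-tensor $\phi$, vector field $\xi$ (characteristic vector field) and $1$-form $\eta$ with $\phi^2X=\varepsilon X+\eta(X)\xi$, $g_M(\phi X,\phi Y)=g_M(X,Y)+\eta(X)\eta(Y)$, $\eta(X)=\varepsilon g_M(X,\xi)$, $\eta(\xi)=-\varepsilon$. A semi-Riemannian submersion $F:M\to N$ is a submersion with nondegenerate fibres such that $F_*$ is an isometry from $(\ker F_* )^\perp$ onto $TN$; it is anti-invariant if $\phi(\ker F_* )\subseteq(\ker F_* )^\perp$. $\xi$ is vertical if it takes values in $\ker F_*$, horizontal if in $(\ker F_* )^\perp$. *)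

theory Defs
  imports "HOL-Analysis.Analysis"
begin

text \<open>Pointwise (tangent-space) model. Tangent spaces of M are modelled by a
  finite-dimensional real vector space 'v, those of N by 'w; all tensor fields are
  families indexed by points p of M.\<close>

definition sym_bilinear :: "('a::real_vector \<Rightarrow> 'a \<Rightarrow> real) \<Rightarrow> bool" where
  "sym_bilinear g \<longleftrightarrow> bilinear g \<and> (\<forall>x y. g x y = g y x)"

definition orth_compl :: "('a \<Rightarrow> 'a \<Rightarrow> real) \<Rightarrow> 'a set \<Rightarrow> 'a set" where
  "orth_compl g S = {x. \<forall>y\<in>S. g x y = 0}"

definition nondegenerate_on :: "('a \<Rightarrow> 'a \<Rightarrow> real) \<Rightarrow> 'a::real_vector set \<Rightarrow> bool" where
  "nondegenerate_on g S \<longleftrightarrow> (\<forall>x\<in>S. (\<forall>y\<in>S. g x y = 0) \<longrightarrow> x = 0)"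

definition semi_riemannian_form :: "('a::real_vector \<Rightarrow> 'a \<Rightarrow> real) \<Rightarrow> bool" where
  "semi_riemannian_form g \<longleftrightarrow> sym_bilinear g \<and> nondegenerate_on g UNIV"

definition lorentzian_form :: "('a::euclidean_space \<Rightarrow> 'a \<Rightarrow> real) \<Rightarrow> bool" where
  "lorentzian_form g \<longleftrightarrow> semi_riemannian_form g \<and>
     (\<exists>x. g x x < 0) \<and>
     (\<forall>U. subspace U \<and> (\<forall>x\<in>U. x \<noteq> 0 \<longrightarrow> g x x < 0) \<longrightarrow> dim U \<le> 1)"

text \<open>Lorentzian almost contact (eps = -1) / almost paracontact (eps = 1) structure
  at a single tangent space.\<close>
definition lorentzian_almost_paracontact ::
  "real \<Rightarrow> ('a::euclidean_space \<Rightarrow> 'a) \<Rightarrow> 'a \<Rightarrow> ('a \<Rightarrow> real) \<Rightarrow> ('a \<Rightarrow> 'a \<Rightarrow> real) \<Rightarrow> bool" where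
  "lorentzian_almost_paracontact eps phi xi eta g \<longleftrightarrow>
     lorentzian_form g \<and> linear phi \<and> linear eta \<and>
     (\<forall>X. phi (phi X) = eps *\<^sub>R X + eta X *\<^sub>R xi) \<and>
     (\<forall>X Y. g (phi X) (phi Y) = g X Y + eta X * eta Y) \<and>
     (\<forall>X. eta X = eps * g X xi) \<and>
     eta xi = - eps"

definition semi_riem_submersion_at ::
  "('a::euclidean_space \<Rightarrow> 'a \<Rightarrow> real) \<Rightarrow> ('b::euclidean_space \<Rightarrow> 'b \<Rightarrow> real) \<Rightarrow> ('a \<Rightarrow> 'b) \<Rightarrow> bool" where
  "semi_riem_submersion_at gM gN dF \<longleftrightarrow>
     linear dF \<and> surj dF \<and>
     nondegenerate_on gM {v. dF v = 0} \<and>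
     bij_betw dF (orth_compl gM {v. dF v = 0}) UNIV \<and>
     (\<forall>x\<in>orth_compl gM {v. dF v = 0}. \<forall>y\<in>orth_compl gM {v. dF v = 0}.
        gN (dF x) (dF y) = gM x y)"

definition anti_invariant_at :: "('a \<Rightarrow> 'a \<Rightarrow> real) \<Rightarrow> ('a \<Rightarrow> 'a) \<Rightarrow> ('a \<Rightarrow> 'b::zero) \<Rightarrow> bool" where
  "anti_invariant_at gM phi dF \<longleftrightarrow>
     phi ` {v. dF v = 0} \<subseteq> orth_compl gM {v. dF v = 0}"

end

theory Submission
  imports Defs
begin

lemma pointwise:
  fixes phi :: "'v::euclidean_space \<Rightarrow> 'v" and g :: "'v \<Rightarrow> 'v \<Rightarrow> real"
    and gN :: "'w::euclidean_space \<Rightarrow> 'w \<Rightarrow> real" and dF :: "'v \<Rightarrow> 'w"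
  assumes eps: "eps = -1 \<or> eps = 1"
    and dimM: "DIM('v) = 2 * m + 1"
    and dimN: "DIM('w) = n"
    and st: "lorentzian_almost_paracontact eps phi xi eta g"
    and sub: "semi_riem_submersion_at g gN dF"
    and anti: "anti_invariant_at g phi dF"
  shows "(dF xi = 0 \<longrightarrow> m \<le> n \<and> n \<le> 2 * m) \<and> (dF xi \<noteq> 0 \<longrightarrow> m + 1 \<le> n)
     \<and> (xi \<in> orth_compl g {v. dF v = 0} \<longrightarrow> dF xi \<noteq> 0)"
proof -
  define K where "K = {v. dF v = 0}"
  define H where "H = orth_compl g K"
  have lf: "linear dF" and bij: "bij_betw dF H UNIV" using sub
    by (auto simp: semi_riem_submersion_at_def H_def K_def)
  have lphi: "linear phi" and leta: "linear eta" and bil: "bilinear g"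
    and phi2: "\<And>X. phi (phi X) = eps *\<^sub>R X + eta X *\<^sub>R xi"
    and etag: "\<And>X. eta X = eps * g X xi" and etaxi: "eta xi = - eps"
    using st by (auto simp: lorentzian_almost_paracontact_def lorentzian_form_def
        semi_riemannian_form_def sym_bilinear_def)
  have eps2: "eps * eps = 1" using eps by auto
  have phiK: "phi ` K \<subseteq> H" using anti by (auto simp: anti_invariant_at_def H_def K_def)
  have subK: "subspace K" unfolding K_def using lf by (rule linear_subspace_kernel)
  have subH: "subspace H" unfolding H_def orth_compl_def subspace_def
    using bil by (auto simp: bilinear_lzero bilinear_ladd bilinear_lmul)
  have injH: "inj_on dF H" using bij by (simp add: bij_betw_def)
  have imH: "dF ` H = UNIV" using bij by (simp add: bij_betw_def)
  have dimH: "dim H = n"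
    using dim_image_eq[OF lf, of H] injH imH subH dimN by (simp add: span_eq_iff[THEN iffD2, OF subH] dim_UNIV)
  have KH0: "K \<inter> H = {0}"
  proof -
    have "x = 0" if "x \<in> K" "x \<in> H" for x
      using injH that subspace_0[OF subH] linear_0[OF lf] unfolding K_def inj_on_def by auto
    then show ?thesis using subspace_0[OF subH] subspace_0[OF subK] by auto
  qed
  have KHsum: "{x + y |x y. x \<in> K \<and> y \<in> H} = UNIV"
  proof -
    have "v \<in> {x + y |x y. x \<in> K \<and> y \<in> H}" for v
    proof -
      obtain h where h: "h \<in> H" "dF h = dF v" using imH by (metis UNIV_I imageE)
      have "v - h \<in> K" using h linear_diff[OF lf] by (simp add: K_def)
      then show ?thesis using h by (intro CollectI exI[of _ "v - h"] exI[of _ h]) auto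
    qed
    then show ?thesis by auto
  qed
  have dimK: "dim K + n = 2 * m + 1"
    using dim_sums_Int[OF subK subH] KHsum KH0 dimH dimM by (simp add: dim_UNIV)
  have xinz: "xi \<noteq> 0" using etaxi eps linear_0[OF leta] by auto
  have gxixi: "g xi xi = -1" using etag[of xi] etaxi eps by auto
  have kerphi: "x = (- eps * eta x) *\<^sub>R xi" if "phi x = 0" for x
  proof -
    have "0 = eps *\<^sub>R x + eta x *\<^sub>R xi" using phi2[of x] that linear_0[OF lphi] by simp
    then have "eps *\<^sub>R (eps *\<^sub>R x + eta x *\<^sub>R xi) = 0" by simp
    then show ?thesis using eps2 by (simp add: algebra_simps eq_neg_iff_add_eq_0)
  qed
  have dimimg: "dim S \<le> n" if "S \<subseteq> H" "subspace S" for S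
  proof -
    have "dim (dF ` S) = dim S"
      by (rule dim_image_eq[OF lf]) (use that injH in \<open>metis span_eq_iff inj_on_subset\<close>)
    then show ?thesis using dim_subset_UNIV[of "dF ` S"] dimN by simp
  qed
  have c3: "xi \<in> H \<longrightarrow> dF xi \<noteq> 0" using KH0 xinz by (auto simp: K_def)
  have c2: "m + 1 \<le> n" if "dF xi \<noteq> 0"
  proof -
    have inj: "inj_on phi K"
    proof (rule linear_inj_on_iff_eq_0[THEN iffD2, OF lphi subK], intro ballI impI)
      fix x assume x: "x \<in> K" "phi x = 0"
      show "x = 0"
      proof (rule ccontr)
        assume "x \<noteq> 0"
        then have c: "- eps * eta x \<noteq> 0" using kerphi[OF x(2)] by auto
        have "inverse (- eps * eta x) *\<^sub>R x = inverse (- eps * eta x) *\<^sub>R ((- eps * eta x) *\<^sub>R xi)"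
          using kerphi[OF x(2)] by simp
        also have "\<dots> = xi" using c by (simp add: field_simps)
        finally have "xi = inverse (- eps * eta x) *\<^sub>R x" by simp
        then have "xi \<in> K" using subspace_scale[OF subK x(1)] by metis
        then show False using that by (simp add: K_def)
      qed
    qed
    have "dim (phi ` K) = dim K"
      by (rule dim_image_eq[OF lphi]) (use inj subK in \<open>metis span_eq_iff\<close>)
    moreover have "dim (phi ` K) \<le> n" by (rule dimimg[OF phiK linear_subspace_image[OF lphi subK]])
    ultimately show ?thesis using dimK by linarith
  qed
  have c1: "m \<le> n \<and> n \<le> 2 * m" if xiK: "dF xi = 0"
  proof -
    define K' where "K' = K \<inter> {x. g x xi = 0}"
    have subK': "subspace K'" unfolding K'_def
      proof (rule subspace_inter[OF subK])
      show "subspace {x. g x xi = 0}"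
        using bil by (auto simp: subspace_def bilinear_lzero bilinear_ladd bilinear_lmul)
    qed
    have subL: "subspace (span {xi})" by simp
    have sum: "{x + y |x y. x \<in> K' \<and> y \<in> span {xi}} = K"
    proof
      show "{x + y |x y. x \<in> K' \<and> y \<in> span {xi}} \<subseteq> K"
        using xiK subK by (auto simp: K'_def span_singleton K_def subspace_def)
      show "K \<subseteq> {x + y |x y. x \<in> K' \<and> y \<in> span {xi}}"
      proof
        fix x assume x: "x \<in> K"
        have "x + g x xi *\<^sub>R xi \<in> K" using x xiK subK by (auto simp: subspace_def K_def)
        moreover have "g (x + g x xi *\<^sub>R xi) xi = 0"
          using gxixi bil by (simp add: bilinear_ladd bilinear_lmul)
        ultimately have "x + g x xi *\<^sub>R xi \<in> K'" by (simp add: K'_def)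
        moreover have "(- g x xi) *\<^sub>R xi \<in> span {xi}" by (intro span_mul span_base) simp
        ultimately show "x \<in> {x + y |x y. x \<in> K' \<and> y \<in> span {xi}}"
          by (intro CollectI exI[of _ "x + g x xi *\<^sub>R xi"] exI[of _ "(- g x xi) *\<^sub>R xi"]) auto
      qed
    qed
    have "dim (span {xi}) = 1" using xinz by (simp add: dim_span dim_singleton)
    then have dK': "dim K \<le> dim K' + 1" using dim_sums_Int[OF subK' subL] unfolding sum by linarith
    have inj: "inj_on phi K'"
    proof (rule linear_inj_on_iff_eq_0[THEN iffD2, OF lphi subK'], intro ballI impI)
      fix x assume x: "x \<in> K'" "phi x = 0"
      have "eta x = 0" using x etag by (simp add: K'_def)
      then show "x = 0" using kerphi[OF x(2)] by simp
    qed
    have "dim (phi ` K') = dim K'"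
      by (rule dim_image_eq[OF lphi]) (use inj subK' in \<open>metis span_eq_iff\<close>)
    moreover have "dim (phi ` K') \<le> n"
      by (rule dimimg[OF _ linear_subspace_image[OF lphi subK']]) (use phiK in \<open>auto simp: K'_def\<close>)
    moreover have "dim K \<ge> 1"
    proof -
      have "span {xi} \<subseteq> K" using xiK subK by (simp add: K_def span_minimal)
      then have "dim (span {xi}) \<le> dim K" by (rule dim_subset)
      then show ?thesis using \<open>dim (span {xi}) = 1\<close> by simp
    qed
    ultimately show ?thesis using dimK dK' by linarith
  qed
  show ?thesis using c1 c2 c3 by (auto simp: H_def K_def)
qed
theorem mainTheorem3:
  fixes eps :: real and m n :: nat
    and phi :: "'p \<Rightarrow> 'v::euclidean_space \<Rightarrow> 'v" and xi :: "'p \<Rightarrow> 'v"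
    and eta :: "'p \<Rightarrow> 'v \<Rightarrow> real" and gM :: "'p \<Rightarrow> 'v \<Rightarrow> 'v \<Rightarrow> real"
    and gN :: "'p \<Rightarrow> 'w::euclidean_space \<Rightarrow> 'w \<Rightarrow> real"
    and dF :: "'p \<Rightarrow> 'v \<Rightarrow> 'w"
  assumes eps: "eps = -1 \<or> eps = 1"
    and dimM: "DIM('v) = 2 * m + 1"
    and dimN: "DIM('w) = n"
    and struct: "\<And>p. lorentzian_almost_paracontact eps (phi p) (xi p) (eta p) (gM p)"
    and gN: "\<And>p. semi_riemannian_form (gN p)"
    and subm: "\<And>p. semi_riem_submersion_at (gM p) (gN p) (dF p)"
    and anti: "\<And>p. anti_invariant_at (gM p) (phi p) (dF p)"
  shows "((\<forall>p. dF p (xi p) = 0) \<longrightarrow> m \<le> n \<and> n \<le> 2 * m)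
       \<and> (m = n \<longrightarrow> (\<forall>p. dF p (xi p) = 0))
       \<and> ((\<forall>p. xi p \<in> orth_compl (gM p) {v. dF p v = 0}) \<longrightarrow> m + 1 \<le> n)"
proof -
  have P: "(dF p (xi p) = 0 \<longrightarrow> m \<le> n \<and> n \<le> 2 * m) \<and> (dF p (xi p) \<noteq> 0 \<longrightarrow> m + 1 \<le> n)
     \<and> (xi p \<in> orth_compl (gM p) {v. dF p v = 0} \<longrightarrow> dF p (xi p) \<noteq> 0)" for p
    using pointwise[OF eps dimM dimN struct[of p] subm[of p] anti[of p]] by blast
  show ?thesis
  proof (rule conjI[OF impI conjI[OF impI impI]])
    assume "\<forall>p. dF p (xi p) = 0"
    then show "m \<le> n \<and> n \<le> 2 * m" using P[of undefined] by auto
  next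
    assume "m = n"
    then show "\<forall>p. dF p (xi p) = 0" using P by force
  next
    assume "\<forall>p. xi p \<in> orth_compl (gM p) {v. dF p v = 0}"
    then show "m + 1 \<le> n" using P[of undefined] by auto
  qed
qed

end
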